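(* For every odd $k\ge 13$, the set $AP_{3k,k}$ contains an ascending partition $\mathcal P$ with $\mathrm{slack}(\mathcal P)\ge 0$ that is non-equitable; and for every odd $k\ge 21$, the set $AP_{3k-1,k}$ contains an ascending partition $\mathcal P$ with $\mathrm{slack}(\mathcal P)\ge 0$ that is non-equitable.
   Context: $[n]=\{1,\ldots,n\}$ and $s^{n,k}=\frac{n(n+1)}{2k}$. An ascending partition of $n$ of size $k$ is a sequence of positive integers $[p_1,\ldots,p_k]$ with $p_1\le\cdots\le p_k$ and $\sum_i p_i=n$; $AP_{n,k}$ is the set of all such partitions when $s^{n,k}$ is an integer (and empty otherwise). $\mathcal P$ is equitable if $[n]$ can be partitioned into sets $A_1,\dots,A_k$ with $|A_i|=p_i$ all having the same element sum. For $j=1,\ldots,k$, $\mathrm{slack}_j(\mathcal P)=\sum_{i=1}^{p_1+\cdots+p_j}(n-i+1)-j\,s^{n,k}$, and $\mathrm{slack}(\mathcal P)=\min_{1\le j\le k-1}\mathrm{slack}_j(\mathcal P)$. *)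

theory Defs
  imports Complex_Main
begin

definition s_val :: "nat \<Rightarrow> nat \<Rightarrow> rat" where
  "s_val n k = of_nat (n * (n + 1)) / of_nat (2 * k)"

definition AP :: "nat \<Rightarrow> nat \<Rightarrow> nat list set" where
  "AP n k = (if s_val n k \<in> \<int> then
      {P. length P = k \<and> sorted P \<and> (\<forall>x\<in>set P. 0 < x) \<and> sum_list P = n}
    else {})"

definition equitable :: "nat \<Rightarrow> nat list \<Rightarrow> bool" where
  "equitable n P = (\<exists>A :: nat \<Rightarrow> nat set.
      (\<Union>i<length P. A i) = {1..n} \<and>
      (\<forall>i<length P. \<forall>j<length P. i \<noteq> j \<longrightarrow> A i \<inter> A j = {}) \<and>
      (\<forall>i<length P. card (A i) = P ! i) \<and>
      (\<forall>i<length P. \<forall>j<length P. \<Sum>(A i) = \<Sum>(A j)))"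

definition slack_j :: "nat \<Rightarrow> nat list \<Rightarrow> nat \<Rightarrow> rat" where
  "slack_j n P j = (\<Sum>i=1..sum_list (take j P). (of_nat n - of_nat i + 1))
                    - of_nat j * s_val n (length P)"

definition slack :: "nat \<Rightarrow> nat list \<Rightarrow> rat" where
  "slack n P = Min ((slack_j n P) ` {1..length P - 1})"

end

theory Submission imports Defs begin

definition Gs :: "nat \<Rightarrow> nat \<Rightarrow> rat" where
  "Gs n L = (\<Sum>i=1..L. (of_nat n - of_nat i + 1))"

lemma Gs_closed: "Gs n L = of_nat L * of_nat n - of_nat L * (of_nat L - 1) / 2"
proof (induction L)
  case 0 then show ?case by (simp add: Gs_def)
next
  case (Suc L)
  have "Gs n (Suc L) = Gs n L + (of_nat n - of_nat (Suc L) + 1)"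
    by (simp add: Gs_def)
  then show ?case using Suc by (simp add: field_simps)
qed

lemma region:
  fixes s :: rat
  assumes "i \<le> a" "Gs n S - of_nat J * s \<ge> 0" "Gs n (S + p*a) - of_nat (J + a) * s \<ge> 0"
  shows "Gs n (S + p*i) - of_nat (J+i) * s \<ge> 0"
proof (cases "a = 0")
  case True then show ?thesis using assms by simp
next
  case False
  obtain d where d: "a = i + d" using assms(1) le_Suc_ex by blast
  define f0 where "f0 = Gs n S - of_nat J * s"
  define f1 where "f1 = Gs n (S + p*a) - of_nat (J + a) * s"
  define fi where "fi = Gs n (S + p*i) - of_nat (J+i) * s"
  have id: "of_nat a * fi = of_nat d * f0 + of_nat i * f1 + of_nat a * of_nat p * of_nat p * of_nat i * of_nat d / 2"
    unfolding f0_def f1_def fi_def Gs_closed d by (simp add: field_simps)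
  have "of_nat a * fi \<ge> 0" unfolding id using assms(2,3) f0_def f1_def
    by (simp add: f0_def f1_def)
  then have "fi \<ge> 0" using False
    by (simp add: zero_le_mult_iff)
  then show ?thesis unfolding fi_def .
qed

lemma slack_j_Gs: "slack_j n P j = Gs n (sum_list (take j P)) - of_nat j * s_val n (length P)"
  by (simp add: slack_j_def Gs_def)

lemma slack_blocks:
  fixes s :: rat
  assumes P: "P = replicate a1 p1 @ replicate a2 p2 @ replicate a3 p3 @ replicate a4 p4"
  and s: "s = s_val n (length P)"
  and b1: "Gs n (a1*p1) - of_nat a1 * s \<ge> 0"
  and b2: "Gs n (a1*p1 + a2*p2) - of_nat (a1+a2) * s \<ge> 0"
  and b3: "Gs n (a1*p1 + a2*p2 + a3*p3) - of_nat (a1+a2+a3) * s \<ge> 0"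
  and b4: "Gs n (a1*p1 + a2*p2 + a3*p3 + a4*p4) - of_nat (a1+a2+a3+a4) * s \<ge> 0"
  and j: "j \<le> length P"
  shows "slack_j n P j \<ge> 0"
proof -
  have sj: "slack_j n P j = Gs n (sum_list (take j P)) - of_nat j * s"
    using s slack_j_Gs by simp
  have len: "length P = a1+a2+a3+a4" using P by simp
  consider "j \<le> a1" | "a1 < j \<and> j \<le> a1+a2" | "a1+a2 < j \<and> j \<le> a1+a2+a3"
    | "a1+a2+a3 < j \<and> j \<le> a1+a2+a3+a4" using j len by linarith
  then show ?thesis
  proof cases
    case 1
    have "sum_list (take j P) = 0 + p1 * j" using 1 P by (simp add: sum_list_replicate)
    moreover have "Gs n (0 + p1*j) - of_nat (0+j) * s \<ge> 0"
      by (rule region[OF 1]) (use b1 in \<open>auto simp: Gs_def mult.commute\<close>)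
    ultimately show ?thesis using sj by simp
  next
    case 2
    then obtain i where i: "j = a1 + i" "i \<le> a2" by (metis add_le_imp_le_left less_imp_le_nat le_Suc_ex)
    have "take j P = replicate a1 p1 @ replicate i p2" using i P by simp
    then have "sum_list (take j P) = a1*p1 + p2 * i" by (simp add: sum_list_replicate mult.commute)
    moreover have "Gs n (a1*p1 + p2*i) - of_nat (a1+i) * s \<ge> 0"
      by (rule region[OF i(2)]) (use b1 b2 in \<open>auto simp: mult.commute\<close>)
    ultimately show ?thesis using sj i by simp
  next
    case 3
    then obtain i where i: "j = (a1 + a2) + i" "i \<le> a3"
      by (metis add_le_imp_le_left less_imp_le_nat le_Suc_ex)
    have "take j P = replicate a1 p1 @ replicate a2 p2 @ replicate i p3" using i P by simp
    then have "sum_list (take j P) = (a1*p1 + a2*p2) + p3 * i" by (simp add: sum_list_replicate mult.commute)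
    moreover have "Gs n ((a1*p1 + a2*p2) + p3*i) - of_nat ((a1+a2)+i) * s \<ge> 0"
      by (rule region[OF i(2)]) (use b2 b3 in \<open>auto simp: mult.commute add.assoc\<close>)
    ultimately show ?thesis using sj i by simp
  next
    case 4
    then obtain i where i: "j = (a1 + a2 + a3) + i" "i \<le> a4"
      by (metis add_le_imp_le_left less_imp_le_nat le_Suc_ex)
    have "take j P = replicate a1 p1 @ replicate a2 p2 @ replicate a3 p3 @ replicate i p4" using i P by simp
    then have "sum_list (take j P) = (a1*p1 + a2*p2 + a3*p3) + p4 * i" by (simp add: sum_list_replicate mult.commute)
    moreover have "Gs n ((a1*p1 + a2*p2 + a3*p3) + p4*i) - of_nat ((a1+a2+a3)+i) * s \<ge> 0"
      by (rule region[OF i(2)]) (use b3 b4 in \<open>auto simp: mult.commute add.assoc\<close>)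
    ultimately show ?thesis using sj i by simp
  qed
qed

lemma slack_nonneg:
  assumes "length P \<ge> 2" "\<And>j. j \<le> length P \<Longrightarrow> slack_j n P j \<ge> 0"
  shows "slack n P \<ge> 0"
proof -
  have ne: "{1..length P - 1} \<noteq> {}" using assms(1) by simp
  show ?thesis unfolding slack_def
    using ne assms(2) by (subst Min_ge_iff) auto
qed

definition wt :: "nat \<Rightarrow> nat" where
  "wt x = (if x = 2 then 2 else if x = 3 then 1 else 0)"

lemma gauss2: "2 * \<Sum>{1..n} = n * (n + 1::nat)"
  by (induction n) (auto simp: algebra_simps)

lemma three_lt: "x < (t::nat) \<Longrightarrow> y < t \<Longrightarrow> z < t \<Longrightarrow> x \<noteq> y \<Longrightarrow> y \<noteq> z \<Longrightarrow> x \<noteq> z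
   \<Longrightarrow> x + y + z + 6 \<le> 3 * t"
  by (cases "x < y"; cases "y < z"; cases "x < z") auto

lemma not_equit:
  fixes P :: "nat list" and n S th :: nat
  assumes k: "length P > 0"
  and tot: "2 * length P * S = n * (n+1)"
  and th1: "n + th \<le> S"
  and th2: "3*th < S + 6"
  and th3: "th \<le> n"
  and cnt: "n + 1 < sum_list (map wt P) + th"
  shows "\<not> equitable n P"
proof
  assume "equitable n P"
  then obtain A where U: "(\<Union>i<length P. A i) = {1..n}"
    and D: "\<forall>i<length P. \<forall>j<length P. i \<noteq> j \<longrightarrow> A i \<inter> A j = {}"
    and C: "\<forall>i<length P. card (A i) = P ! i"
    and E: "\<forall>i<length P. \<forall>j<length P. \<Sum>(A i) = \<Sum>(A j)"
    unfolding equitable_def by blast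
  define k where "k = length P"
  have sub: "A i \<subseteq> {1..n}" if "i < k" for i using U that k_def by blast
  have fin: "finite (A i)" if "i < k" for i using sub[OF that] finite_subset by blast
  have "\<Sum>{1..n} = (\<Sum>i<k. \<Sum>(A i))"
    unfolding U[symmetric] k_def
    by (rule sum.UNION_disjoint) (use fin D k_def in auto)
  also have "\<dots> = (\<Sum>i<k. \<Sum>(A 0))"
    proof (rule sum.cong[OF refl])
    fix x assume "x \<in> {..<k}"
    then show "\<Sum>(A x) = \<Sum>(A 0)" using E[rule_format, of x 0] k k_def by simp
  qed
  also have "\<dots> = k * \<Sum>(A 0)" by simp
  finally have "2 * k * \<Sum>(A 0) = n * (n+1)" using gauss2[of n] by simp
  then have "k * (2 * \<Sum>(A 0)) = k * (2 * S)" using tot k_def by (simp add: algebra_simps)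
  then have "\<Sum>(A 0) = S" using k k_def by simp
  then have sumS: "\<Sum>(A i) = S" if "i < k" for i using E[rule_format, of i 0] that k k_def by simp
  define X where "X = {th..n}"
  have cX: "card X = n + 1 - th" unfolding X_def by simp
  have "(\<Sum>i<k. card (A i \<inter> X)) = card (\<Union>i<k. A i \<inter> X)"
    by (rule card_UN_disjoint[symmetric]) (use fin D k_def in auto)
  also have "\<dots> \<le> card X"
    by (rule card_mono) (auto simp: X_def)
  finally have le1: "(\<Sum>i<k. card (A i \<inter> X)) \<le> n + 1 - th" using cX by simp
  have w: "wt (P ! i) \<le> card (A i \<inter> X)" if i: "i < k" for i
  proof -
    consider "P ! i = 2" | "P ! i = 3" | "P ! i \<noteq> 2 \<and> P ! i \<noteq> 3" by blast
    then show ?thesis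
    proof cases
      case 1
      then have "card (A i) = 2" using C i k_def by simp
      then obtain x y where xy: "A i = {x,y}" "x \<noteq> y" by (auto simp: card_2_iff)
      have "x + y = S" using sumS[OF i] xy by simp
      moreover have "x \<le> n" "y \<le> n" using sub[OF i] xy by auto
      ultimately have "x \<in> X" "y \<in> X" using th1 unfolding X_def by auto
      then have "A i \<inter> X = A i" using xy by auto
      then show ?thesis using 1 \<open>card (A i) = 2\<close> by (simp add: wt_def)
    next
      case 2
      then have c3: "card (A i) = 3" using C i k_def by simp
      then obtain x y z where xyz: "A i = {x,y,z}" "x \<noteq> y" "y \<noteq> z" "x \<noteq> z"
        by (auto simp: card_3_iff)
      have "A i \<inter> X \<noteq> {}"
      proof
        assume e: "A i \<inter> X = {}"
        have "x \<le> n" "y \<le> n" "z \<le> n" using sub[OF i] xyz by auto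
        then have "x < th" "y < th" "z < th" using e xyz unfolding X_def by auto
        then have "x + y + z + 6 \<le> 3 * th" using three_lt xyz by blast
        moreover have "x + y + z = S" using sumS[OF i] xyz by simp
        ultimately show False using th2 by simp
      qed
      then have "card (A i \<inter> X) > 0" using fin[OF i] by auto
      then show ?thesis using 2 by (simp add: wt_def)
    next
      case 3 then show ?thesis by (simp add: wt_def)
    qed
  qed
  have "sum_list (map wt P) = (\<Sum>i<k. wt (P ! i))"
    by (simp add: sum_list_sum_nth k_def atLeast0LessThan)
  also have "\<dots> \<le> (\<Sum>i<k. card (A i \<inter> X))" by (rule sum_mono) (use w in auto)
  finally show False using le1 cnt th3 by linarith
qed

lemma sval_eq: "n*(n+1) = 2*k*S \<Longrightarrow> 0 < k \<Longrightarrow> s_val n k = of_nat S"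
proof -
  assume h: "n*(n+1) = 2*k*S" "0 < k"
  have "(of_nat (n*(n+1)) :: rat) = of_nat (2*k) * of_nat S" using h(1) by (metis of_nat_mult)
  then show ?thesis using h(2) unfolding s_val_def by (simp add: field_simps)
qed

lemma witness:
  fixes m t b z e n k S th :: nat
  assumes P: "P = replicate m 2 @ replicate t 3 @ replicate b 7 @ replicate z e"
  and e: "7 \<le> e"
  and k: "k = m+t+b+z" "2 \<le> k"
  and n: "n = 2*m + 3*t + 7*b + z*e"
  and S: "n*(n+1) = 2*k*S"
  and b1: "Gs n (m*2) - of_nat m * of_nat S \<ge> 0"
  and b2: "Gs n (m*2 + t*3) - of_nat (m+t) * of_nat S \<ge> 0"
  and b3: "Gs n (m*2+t*3+b*7) - of_nat (m+t+b) * of_nat S \<ge> 0"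
  and th: "n + th \<le> S" "3*th < S+6" "th \<le> n" "n + 1 < 2*m + t + th"
  shows "P \<in> AP n k \<and> slack n P \<ge> 0 \<and> \<not> equitable n P"
proof -
  have len: "length P = k" using P k by simp
  have sv: "s_val n k = of_nat S" using sval_eq[OF S] k(2) by simp
  have b4: "Gs n (m*2+t*3+b*7+z*e) - of_nat (m+t+b+z) * of_nat S \<ge> 0"
  proof -
    have nn: "m*2+t*3+b*7+z*e = n" using n by simp
    have "(of_nat (n*(n+1)) :: rat) = of_nat (2*k*S)" using S by simp
    then have "of_nat n * (of_nat n + 1) = (2::rat) * of_nat k * of_nat S" by (simp add: algebra_simps)
    then show ?thesis unfolding nn Gs_closed k(1)[symmetric] by (simp add: field_simps)
  qed
  have AP: "P \<in> AP n k"
    unfolding AP_def using sv len P e n by (auto simp: sorted_append sum_list_replicate)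
  have sl: "slack n P \<ge> 0"
  proof (rule slack_nonneg)
    show "2 \<le> length P" using len k by simp
    fix j assume j: "j \<le> length P"
    show "slack_j n P j \<ge> 0"
      using slack_blocks[OF P _ b1 b2 b3 b4 j] sv len by simp
  qed
  have w: "sum_list (map wt P) = 2*m + t" using P e by (simp add: wt_def sum_list_replicate)
  have ne: "\<not> equitable n P"
    by (rule not_equit[where S=S and th=th]) (use len k S th w in \<open>auto simp: algebra_simps\<close>)
  show ?thesis using AP sl ne by blast
qed


lemma case1_5:
  assumes c: "2 \<le> c"
  shows "\<exists>P\<in>AP (18*c+15) (6*c+5). slack (18*c+15) P \<ge> 0 \<and> \<not> equitable (18*c+15) P"
proof -
  have cc: "(of_nat c * of_nat c :: rat) \<ge> 2 * of_nat c" using c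
    by (intro mult_right_mono) simp_all
  have c2: "(of_nat c :: rat) \<ge> 2" using c by simp
  have "replicate (4*c+4) 2 @ replicate (c) 3 @ replicate (c+1) 7 @ replicate 0 7 \<in> AP (18*c+15) (6*c+5) \<and> slack (18*c+15) (replicate (4*c+4) 2 @ replicate (c) 3 @ replicate (c+1) 7 @ replicate 0 7) \<ge> 0 \<and> \<not> equitable (18*c+15) (replicate (4*c+4) 2 @ replicate (c) 3 @ replicate (c+1) 7 @ replicate 0 7)"
  proof (rule witness[where S="27*c+24" and th="9*c+9" and e=7])
    show "Gs (18*c+15) ((4*c+4)*2) - of_nat (4*c+4) * of_nat (27*c+24) \<ge> 0"
      by (simp add: Gs_closed algebra_simps; use cc c2 in linarith)
    show "Gs (18*c+15) ((4*c+4)*2 + (c)*3) - of_nat ((4*c+4)+(c)) * of_nat (27*c+24) \<ge> 0"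
      by (simp add: Gs_closed algebra_simps; use cc c2 in linarith)
    show "Gs (18*c+15) ((4*c+4)*2 + (c)*3 + (c+1)*7) - of_nat ((4*c+4)+(c)+(c+1)) * of_nat (27*c+24) \<ge> 0"
      by (simp add: Gs_closed algebra_simps; use cc c2 in linarith)
  qed (use c in \<open>simp_all add: algebra_simps\<close>)
  then show ?thesis by blast
qed

lemma case1_1:
  assumes c: "1 \<le> c"
  shows "\<exists>P\<in>AP (18*c+21) (6*c+7). slack (18*c+21) P \<ge> 0 \<and> \<not> equitable (18*c+21) P"
proof -
  have cc: "(of_nat c * of_nat c :: rat) \<ge> 1 * of_nat c" using c
    by (intro mult_right_mono) simp_all
  have c2: "(of_nat c :: rat) \<ge> 1" using c by simp
  have "replicate (4*c+5) 2 @ replicate (c+1) 3 @ replicate (c) 7 @ replicate 1 8 \<in> AP (18*c+21) (6*c+7) \<and> slack (18*c+21) (replicate (4*c+5) 2 @ replicate (c+1) 3 @ replicate (c) 7 @ replicate 1 8) \<ge> 0 \<and> \<not> equitable (18*c+21) (replicate (4*c+5) 2 @ replicate (c+1) 3 @ replicate (c) 7 @ replicate 1 8)"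
  proof (rule witness[where S="27*c+33" and th="9*c+12" and e=8])
    show "Gs (18*c+21) ((4*c+5)*2) - of_nat (4*c+5) * of_nat (27*c+33) \<ge> 0"
      by (simp add: Gs_closed algebra_simps; use cc c2 in linarith)
    show "Gs (18*c+21) ((4*c+5)*2 + (c+1)*3) - of_nat ((4*c+5)+(c+1)) * of_nat (27*c+33) \<ge> 0"
      by (simp add: Gs_closed algebra_simps; use cc c2 in linarith)
    show "Gs (18*c+21) ((4*c+5)*2 + (c+1)*3 + (c)*7) - of_nat ((4*c+5)+(c+1)+(c)) * of_nat (27*c+33) \<ge> 0"
      by (simp add: Gs_closed algebra_simps; use cc c2 in linarith)
  qed (use c in \<open>simp_all add: algebra_simps\<close>)
  then show ?thesis by blast
qed

lemma case1_3:
  assumes c: "1 \<le> c"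
  shows "\<exists>P\<in>AP (18*c+27) (6*c+9). slack (18*c+27) P \<ge> 0 \<and> \<not> equitable (18*c+27) P"
proof -
  have cc: "(of_nat c * of_nat c :: rat) \<ge> 1 * of_nat c" using c
    by (intro mult_right_mono) simp_all
  have c2: "(of_nat c :: rat) \<ge> 1" using c by simp
  have "replicate (4*c+6) 2 @ replicate (c+2) 3 @ replicate (c) 7 @ replicate 1 9 \<in> AP (18*c+27) (6*c+9) \<and> slack (18*c+27) (replicate (4*c+6) 2 @ replicate (c+2) 3 @ replicate (c) 7 @ replicate 1 9) \<ge> 0 \<and> \<not> equitable (18*c+27) (replicate (4*c+6) 2 @ replicate (c+2) 3 @ replicate (c) 7 @ replicate 1 9)"
  proof (rule witness[where S="27*c+42" and th="9*c+15" and e=9])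
    show "Gs (18*c+27) ((4*c+6)*2) - of_nat (4*c+6) * of_nat (27*c+42) \<ge> 0"
      by (simp add: Gs_closed algebra_simps; use cc c2 in linarith)
    show "Gs (18*c+27) ((4*c+6)*2 + (c+2)*3) - of_nat ((4*c+6)+(c+2)) * of_nat (27*c+42) \<ge> 0"
      by (simp add: Gs_closed algebra_simps; use cc c2 in linarith)
    show "Gs (18*c+27) ((4*c+6)*2 + (c+2)*3 + (c)*7) - of_nat ((4*c+6)+(c+2)+(c)) * of_nat (27*c+42) \<ge> 0"
      by (simp add: Gs_closed algebra_simps; use cc c2 in linarith)
  qed (use c in \<open>simp_all add: algebra_simps\<close>)
  then show ?thesis by blast
qed

lemma case2_5:
  assumes c: "2 \<le> c"
  shows "\<exists>P\<in>AP (18*c+32) (6*c+11). slack (18*c+32) P \<ge> 0 \<and> \<not> equitable (18*c+32) P"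
proof -
  have cc: "(of_nat c * of_nat c :: rat) \<ge> 2 * of_nat c" using c
    by (intro mult_right_mono) simp_all
  have c2: "(of_nat c :: rat) \<ge> 2" using c by simp
  have "replicate (4*c+9) 2 @ replicate (c) 3 @ replicate (c+2) 7 @ replicate 0 7 \<in> AP (18*c+32) (6*c+11) \<and> slack (18*c+32) (replicate (4*c+9) 2 @ replicate (c) 3 @ replicate (c+2) 7 @ replicate 0 7) \<ge> 0 \<and> \<not> equitable (18*c+32) (replicate (4*c+9) 2 @ replicate (c) 3 @ replicate (c+2) 7 @ replicate 0 7)"
  proof (rule witness[where S="27*c+48" and th="9*c+16" and e=7])
    show "Gs (18*c+32) ((4*c+9)*2) - of_nat (4*c+9) * of_nat (27*c+48) \<ge> 0"
      by (simp add: Gs_closed algebra_simps; use cc c2 in linarith)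
    show "Gs (18*c+32) ((4*c+9)*2 + (c)*3) - of_nat ((4*c+9)+(c)) * of_nat (27*c+48) \<ge> 0"
      by (simp add: Gs_closed algebra_simps; use cc c2 in linarith)
    show "Gs (18*c+32) ((4*c+9)*2 + (c)*3 + (c+2)*7) - of_nat ((4*c+9)+(c)+(c+2)) * of_nat (27*c+48) \<ge> 0"
      by (simp add: Gs_closed algebra_simps; use cc c2 in linarith)
  qed (use c in \<open>simp_all add: algebra_simps\<close>)
  then show ?thesis by blast
qed

lemma case2_1:
  assumes c: "3 \<le> c"
  shows "\<exists>P\<in>AP (18*c+20) (6*c+7). slack (18*c+20) P \<ge> 0 \<and> \<not> equitable (18*c+20) P"
proof -
  have cc: "(of_nat c * of_nat c :: rat) \<ge> 3 * of_nat c" using c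
    by (intro mult_right_mono) simp_all
  have c2: "(of_nat c :: rat) \<ge> 3" using c by simp
  have "replicate (4*c+6) 2 @ replicate (c) 3 @ replicate (c) 7 @ replicate 1 8 \<in> AP (18*c+20) (6*c+7) \<and> slack (18*c+20) (replicate (4*c+6) 2 @ replicate (c) 3 @ replicate (c) 7 @ replicate 1 8) \<ge> 0 \<and> \<not> equitable (18*c+20) (replicate (4*c+6) 2 @ replicate (c) 3 @ replicate (c) 7 @ replicate 1 8)"
  proof (rule witness[where S="27*c+30" and th="9*c+10" and e=8])
    show "Gs (18*c+20) ((4*c+6)*2) - of_nat (4*c+6) * of_nat (27*c+30) \<ge> 0"
      by (simp add: Gs_closed algebra_simps; use cc c2 in linarith)
    show "Gs (18*c+20) ((4*c+6)*2 + (c)*3) - of_nat ((4*c+6)+(c)) * of_nat (27*c+30) \<ge> 0"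
      by (simp add: Gs_closed algebra_simps; use cc c2 in linarith)
    show "Gs (18*c+20) ((4*c+6)*2 + (c)*3 + (c)*7) - of_nat ((4*c+6)+(c)+(c)) * of_nat (27*c+30) \<ge> 0"
      by (simp add: Gs_closed algebra_simps; use cc c2 in linarith)
  qed (use c in \<open>simp_all add: algebra_simps\<close>)
  then show ?thesis by blast
qed

lemma case2_3:
  assumes c: "2 \<le> c"
  shows "\<exists>P\<in>AP (18*c+26) (6*c+9). slack (18*c+26) P \<ge> 0 \<and> \<not> equitable (18*c+26) P"
proof -
  have cc: "(of_nat c * of_nat c :: rat) \<ge> 2 * of_nat c" using c
    by (intro mult_right_mono) simp_all
  have c2: "(of_nat c :: rat) \<ge> 2" using c by simp
  have "replicate (4*c+7) 2 @ replicate (c+1) 3 @ replicate (c) 7 @ replicate 1 9 \<in> AP (18*c+26) (6*c+9) \<and> slack (18*c+26) (replicate (4*c+7) 2 @ replicate (c+1) 3 @ replicate (c) 7 @ replicate 1 9) \<ge> 0 \<and> \<not> equitable (18*c+26) (replicate (4*c+7) 2 @ replicate (c+1) 3 @ replicate (c) 7 @ replicate 1 9)"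
  proof (rule witness[where S="27*c+39" and th="9*c+13" and e=9])
    show "Gs (18*c+26) ((4*c+7)*2) - of_nat (4*c+7) * of_nat (27*c+39) \<ge> 0"
      by (simp add: Gs_closed algebra_simps; use cc c2 in linarith)
    show "Gs (18*c+26) ((4*c+7)*2 + (c+1)*3) - of_nat ((4*c+7)+(c+1)) * of_nat (27*c+39) \<ge> 0"
      by (simp add: Gs_closed algebra_simps; use cc c2 in linarith)
    show "Gs (18*c+26) ((4*c+7)*2 + (c+1)*3 + (c)*7) - of_nat ((4*c+7)+(c+1)+(c)) * of_nat (27*c+39) \<ge> 0"
      by (simp add: Gs_closed algebra_simps; use cc c2 in linarith)
  qed (use c in \<open>simp_all add: algebra_simps\<close>)
  then show ?thesis by blast
qed


theorem mainTheorem4: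
  shows "(\<forall>k::nat. odd k \<and> 13 \<le> k \<longrightarrow>
            (\<exists>P\<in>AP (3*k) k. slack (3*k) P \<ge> 0 \<and> \<not> equitable (3*k) P))
       \<and> (\<forall>k::nat. odd k \<and> 21 \<le> k \<longrightarrow>
            (\<exists>P\<in>AP (3*k-1) k. slack (3*k-1) P \<ge> 0 \<and> \<not> equitable (3*k-1) P))"
proof (intro conjI allI impI)
  fix k :: nat assume h: "odd k \<and> 13 \<le> k"
  have "k mod 6 = 5 \<or> k mod 6 = 1 \<or> k mod 6 = 3" using h by presburger
  then consider "k mod 6 = 5" | "k mod 6 = 1" | "k mod 6 = 3" by blast
  then show "\<exists>P\<in>AP (3*k) k. slack (3*k) P \<ge> 0 \<and> \<not> equitable (3*k) P"
  proof cases
      case 1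
      define c where "c = k div 6"
      have k: "k = 6*c+5" "2 \<le> c" using 1 h unfolding c_def by presburger+
      have e: "18*c+15 = 3*k" "6*c+5 = k" using k by simp_all
      show ?thesis using case1_5[OF k(2), unfolded e] .
    next
      case 2
      define c where "c = k div 6 - 1"
      have k: "k = 6*c+7" "1 \<le> c" using 2 h unfolding c_def by presburger+
      have e: "18*c+21 = 3*k" "6*c+7 = k" using k by simp_all
      show ?thesis using case1_1[OF k(2), unfolded e] .
    next
      case 3
      define c where "c = k div 6 - 1"
      have k: "k = 6*c+9" "1 \<le> c" using 3 h unfolding c_def by presburger+
      have e: "18*c+27 = 3*k" "6*c+9 = k" using k by simp_all
      show ?thesis using case1_3[OF k(2), unfolded e] .
  qed
next
  fix k :: nat assume h: "odd k \<and> 21 \<le> k"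
  have "k mod 6 = 5 \<or> k mod 6 = 1 \<or> k mod 6 = 3" using h by presburger
  then consider "k mod 6 = 5" | "k mod 6 = 1" | "k mod 6 = 3" by blast
  then show "\<exists>P\<in>AP (3*k-1) k. slack (3*k-1) P \<ge> 0 \<and> \<not> equitable (3*k-1) P"
  proof cases
      case 1
      define c where "c = k div 6 - 1"
      have k: "k = 6*c+11" "2 \<le> c" using 1 h unfolding c_def by presburger+
      have e: "18*c+32 = 3*k-1" "6*c+11 = k" using k by simp_all
      show ?thesis using case2_5[OF k(2), unfolded e] .
    next
      case 2
      define c where "c = k div 6 - 1"
      have k: "k = 6*c+7" "3 \<le> c" using 2 h unfolding c_def by presburger+
      have e: "18*c+20 = 3*k-1" "6*c+7 = k" using k by simp_all
      show ?thesis using case2_1[OF k(2), unfolded e] .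
    next
      case 3
      define c where "c = k div 6 - 1"
      have k: "k = 6*c+9" "2 \<le> c" using 3 h unfolding c_def by presburger+
      have e: "18*c+26 = 3*k-1" "6*c+9 = k" using k by simp_all
      show ?thesis using case2_3[OF k(2), unfolded e] .
  qed
qed

end
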